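(* Let $A,B,X,Y\in\mathcal{B}(\mathcal{H})$. Then \begin{equation*} w(X^*AY+Y^*BX)\leq 2\|X\|\|Y\|\, w\left(\begin{bmatrix} 0 &A \\ B& 0 \end{bmatrix}\right). \end{equation*} In particular, $$w(X^*AY+Y^*AX)\leq 2\|X\|\|Y\|\, w(A).$$
   Context: $\mathcal{H}$ is a complex Hilbert space and $\mathcal{B}(\mathcal{H})$ is the $C^*$-algebra of all bounded linear operators on $\mathcal{H}$. For $T\in\mathcal{B}(\mathcal{H})$, $w(T)=\sup\{|\langle Tx,x\rangle|:\|x\|=1\}$ is the numerical radius and $\|T\|$ the operator norm. A $2\times 2$ operator matrix with entries in $\mathcal{B}(\mathcal{H})$ is regarded as an operator on $\mathcal{H}\oplus\mathcal{H}$. *)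

theory Defs
  imports "HOL-Analysis.Analysis"
begin

class complex_vector = real_vector +
  fixes scaleC :: "complex \<Rightarrow> 'a \<Rightarrow> 'a"
  assumes scaleC_add_right: "scaleC a (x + y) = scaleC a x + scaleC a y"
    and scaleC_add_left: "scaleC (a + b) x = scaleC a x + scaleC b x"
    and scaleC_scaleC: "scaleC a (scaleC b x) = scaleC (a * b) x"
    and scaleC_one: "scaleC 1 x = x"
    and scaleR_scaleC: "scaleR r x = scaleC (complex_of_real r) x"

class complex_inner = complex_vector + real_normed_vector +
  fixes cinner :: "'a \<Rightarrow> 'a \<Rightarrow> complex"
  assumes cinner_commute: "cinner x y = cnj (cinner y x)"
    and cinner_add_left: "cinner (x + y) z = cinner x z + cinner y z"
    and cinner_scaleC_left: "cinner (scaleC c x) y = cnj c * cinner x y"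
    and norm_eq_sqrt_cinner: "norm x = sqrt (Re (cinner x x))"

class chilbert_space = complex_inner + complete_space

definition bounded_op :: "('a::complex_inner \<Rightarrow> 'a) \<Rightarrow> bool" where
  "bounded_op T \<longleftrightarrow>
     (\<forall>x y. T (x + y) = T x + T y) \<and>
     (\<forall>c x. T (scaleC c x) = scaleC c (T x)) \<and>
     (\<exists>K. \<forall>x. norm (T x) \<le> norm x * K)"

definition is_adjoint :: "('a::complex_inner \<Rightarrow> 'a) \<Rightarrow> ('a \<Rightarrow> 'a) \<Rightarrow> bool" where
  "is_adjoint T Ts \<longleftrightarrow> (\<forall>x y. cinner (T x) y = cinner x (Ts y))"

text \<open>Numerical radius w(T) = sup{|<Tx,x>| : ||x|| = 1}; the 0 only matters for H = {0}.\<close>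
definition numerical_radius :: "('a::complex_inner \<Rightarrow> 'a) \<Rightarrow> real" where
  "numerical_radius T = Sup (insert 0 {cmod (cinner (T x) x) | x. norm x = 1})"

text \<open>Numerical radius of the 2x2 operator matrix [[P, Q], [R, S]] acting on H \<oplus> H
  (with the standard inner product <(x,y),(u,v)> = <x,u> + <y,v>), written out.\<close>
definition numerical_radius2 ::
  "('a::complex_inner \<Rightarrow> 'a) \<Rightarrow> ('a \<Rightarrow> 'a) \<Rightarrow> ('a \<Rightarrow> 'a) \<Rightarrow> ('a \<Rightarrow> 'a) \<Rightarrow> real" where
  "numerical_radius2 P Q R S =
     Sup (insert 0 {cmod (cinner (P x + Q y) x + cinner (R x + S y) y) | x y.
                     (norm x)\<^sup>2 + (norm y)\<^sup>2 = 1})"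

end

theory Submission
  imports Defs
begin


lemma cinner_add_right: "cinner (x::'a::complex_inner) (y + z) = cinner x y + cinner x z"
proof -
  have "cinner x (y + z) = cnj (cinner (y + z) x)" by (rule cinner_commute)
  also have "\<dots> = cnj (cinner y x) + cnj (cinner z x)" by (simp add: cinner_add_left)
  finally show ?thesis by (metis cinner_commute)
qed

lemma cinner_scaleC_right: "cinner (x::'a::complex_inner) (scaleC c y) = c * cinner x y"
proof -
  have "cinner x (scaleC c y) = cnj (cinner (scaleC c y) x)" by (rule cinner_commute)
  also have "\<dots> = c * cnj (cinner y x)" by (simp add: cinner_scaleC_left)
  finally show ?thesis by (metis cinner_commute)
qed

lemma cinner_zero_left [simp]: "cinner 0 (y::'a::complex_inner) = 0"
  using cinner_add_left[of 0 0 y] by simp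

lemma cinner_zero_right [simp]: "cinner (x::'a::complex_inner) 0 = 0"
  using cinner_add_right[of x 0 0] by simp

lemma cinner_minus_left: "cinner (- (x::'a::complex_inner)) y = - cinner x y"
proof -
  have "cinner x y + cinner (- x) y = 0" using cinner_add_left[of x "-x" y] by simp
  from minus_unique[OF this] show ?thesis by simp
qed

lemma cinner_minus_right: "cinner (x::'a::complex_inner) (- y) = - cinner x y"
proof -
  have "cinner x y + cinner x (- y) = 0" using cinner_add_right[of x y "-y"] by simp
  from minus_unique[OF this] show ?thesis by simp
qed

lemma cinner_diff_left: "cinner (x - (y::'a::complex_inner)) z = cinner x z - cinner y z"
  using cinner_add_left[of x "-y" z] by (simp add: cinner_minus_left)

lemma cinner_diff_right: "cinner (x::'a::complex_inner) (y - z) = cinner x y - cinner x z"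
  using cinner_add_right[of x y "-z"] by (simp add: cinner_minus_right)

lemma cinner_scaleR_left: "cinner (scaleR r (x::'a::complex_inner)) y = of_real r * cinner x y"
  by (simp add: scaleR_scaleC cinner_scaleC_left)

lemma cinner_scaleR_right: "cinner (x::'a::complex_inner) (scaleR r y) = of_real r * cinner x y"
  by (simp add: scaleR_scaleC cinner_scaleC_right)

lemma cinner_self: "cinner (x::'a::complex_inner) x = complex_of_real ((norm x)\<^sup>2)"
proof -
  have im: "Im (cinner x x) = 0"
    using cinner_commute[of x x] by (metis cnj.sel(2) equation_minus_iff neg_equal_zero)
  have "Re (cinner x x) \<ge> 0"
  proof (rule ccontr)
    assume "\<not> ?thesis"
    then have "sqrt (Re (cinner x x)) < 0" by simp
    then show False using norm_eq_sqrt_cinner[of x] norm_ge_zero[of x] by linarith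
  qed
  then have "(norm x)\<^sup>2 = Re (cinner x x)" using norm_eq_sqrt_cinner[of x] by simp
  then show ?thesis using im by (simp add: complex_eq_iff)
qed

lemma cauchy_schwarz: "cmod (cinner (x::'a::complex_inner) y) \<le> norm x * norm y"
proof (cases "x = 0")
  case True then show ?thesis by simp
next
  case False
  define n where "n = (norm x)\<^sup>2"
  have n: "n > 0" using False by (simp add: n_def)
  define p where "p = cinner x y"
  define c where "c = p / of_real n"
  define z where "z = y - scaleC c x"
  have "cinner z z = cinner y y - c * cinner y x - cnj c * cinner x y + cnj c * c * cinner x x"
    by (simp add: z_def cinner_diff_left cinner_diff_right cinner_scaleC_left cinner_scaleC_right
        algebra_simps)
  also have "\<dots> = of_real ((norm y)\<^sup>2) - c * cnj p - cnj c * p + cnj c * c * of_real n"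
    by (simp add: cinner_self n_def p_def cinner_commute[of y x])
  also have "\<dots> = of_real ((norm y)\<^sup>2) - p * cnj p / of_real n"
    using n by (simp add: c_def field_simps)
  also have "\<dots> = of_real ((norm y)\<^sup>2 - (cmod p)\<^sup>2 / n)"
    using complex_norm_square[of p] by (simp only: of_real_diff of_real_divide)
  finally have "complex_of_real ((norm z)\<^sup>2) = of_real ((norm y)\<^sup>2 - (cmod p)\<^sup>2 / n)"
    by (simp only: cinner_self)
  then have "(norm z)\<^sup>2 = (norm y)\<^sup>2 - (cmod p)\<^sup>2 / n"
    by (simp only: of_real_eq_iff)
  then have "(cmod p)\<^sup>2 / n \<le> (norm y)\<^sup>2" by (metis diff_ge_0_iff_ge zero_le_power2)
  then have "(cmod p)\<^sup>2 \<le> (norm x * norm y)\<^sup>2"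
    using n by (simp add: n_def divide_le_eq power_mult_distrib mult.commute)
  then show ?thesis unfolding p_def
    by (meson mult_nonneg_nonneg norm_ge_zero power2_le_imp_le)
qed


lemma bop_scaleR:
  assumes "bounded_op T" shows "T (scaleR r x) = scaleR r (T x)"
  using assms unfolding bounded_op_def by (simp add: scaleR_scaleC)

lemma bop_linear:
  assumes "bounded_op T" shows "bounded_linear T"
proof -
  from assms obtain K where K: "\<And>x. norm (T x) \<le> norm x * K"
    unfolding bounded_op_def by blast
  show ?thesis
    by (rule bounded_linear_intro[OF _ bop_scaleR[OF assms] K])
      (use assms in \<open>simp add: bounded_op_def\<close>)
qed

lemma bop_zero: "bounded_op T \<Longrightarrow> T 0 = 0"
  using bop_linear linear_simps(3) bounded_linear.linear by blast

lemma bop_bound: "bounded_op T \<Longrightarrow> norm (T x) \<le> onorm T * norm x"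
  by (rule onorm[OF bop_linear])

lemma bop_onorm_nonneg: "bounded_op T \<Longrightarrow> 0 \<le> onorm T"
  by (rule onorm_pos_le[OF bop_linear])

lemma cmod_cinner_op:
  assumes "bounded_op T"
  shows "cmod (cinner (T y) x) \<le> onorm T * norm y * norm x"
proof -
  have "cmod (cinner (T y) x) \<le> norm (T y) * norm x" by (rule cauchy_schwarz)
  also have "\<dots> \<le> onorm T * norm y * norm x"
    by (rule mult_right_mono[OF bop_bound[OF assms] norm_ge_zero])
  finally show ?thesis .
qed

lemma nr_bdd:
  assumes "bounded_op A"
  shows "bdd_above (insert 0 {cmod (cinner (A x) x) | x. norm x = 1})"
proof -
  have "\<forall>v \<in> insert 0 {cmod (cinner (A x) x) | x. norm x = 1}. v \<le> onorm A"
  proof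
    fix v assume "v \<in> insert 0 {cmod (cinner (A x) x) | x. norm x = 1}"
    then consider "v = 0" | x where "norm x = 1" "v = cmod (cinner (A x) x)" by auto
    then show "v \<le> onorm A"
    proof cases
      case 1 then show ?thesis using bop_onorm_nonneg[OF assms] by simp
    next
      case 2 then show ?thesis using cmod_cinner_op[OF assms, of x x] by simp
    qed
  qed
  then show ?thesis unfolding bdd_above_def by blast 
qed

lemma nr_ge:
  assumes "bounded_op A" "norm x = 1"
  shows "cmod (cinner (A x) x) \<le> numerical_radius A"
  unfolding numerical_radius_def
  by (rule cSup_upper[OF _ nr_bdd[OF assms(1)]]) (use assms(2) in blast)

lemma nr_nonneg:
  assumes "bounded_op A"
  shows "0 \<le> numerical_radius A"
  unfolding numerical_radius_def
  by (rule cSup_upper[OF _ nr_bdd[OF assms(1)]]) blast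

lemma nr_hom:
  assumes "bounded_op A"
  shows "cmod (cinner (A z) z) \<le> numerical_radius A * (norm z)\<^sup>2"
proof (cases "z = 0")
  case True then show ?thesis using bop_zero[OF assms] by simp
next
  case False
  define r where "r = norm z"
  have r: "r > 0" using False by (simp add: r_def)
  define z' where "z' = scaleR (1 / r) z"
  have "norm z' = 1" using r by (simp add: z'_def r_def)
  then have "cmod (cinner (A z') z') \<le> numerical_radius A" by (rule nr_ge[OF assms])
  moreover have eq: "cinner (A z') z' = of_real ((1/r) * (1/r)) * cinner (A z) z"
    by (simp add: z'_def bop_scaleR[OF assms] cinner_scaleR_left cinner_scaleR_right)
  moreover have "cmod (cinner (A z') z') = (1/r) * (1/r) * cmod (cinner (A z) z)"
    unfolding eq norm_mult norm_of_real using r by simp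
  ultimately have "(1/r) * (1/r) * cmod (cinner (A z) z) \<le> numerical_radius A"
    by simp
  then show ?thesis using r by (simp add: r_def field_simps power2_eq_square)
qed

lemma norm_le_one_of_sq:
  fixes x y :: "'a::real_normed_vector"
  assumes "(norm x)\<^sup>2 + (norm y)\<^sup>2 = 1"
  shows "norm x \<le> 1"
proof -
  have "(norm x)\<^sup>2 \<le> 1\<^sup>2" using assms zero_le_power2[of "norm y"] by (simp only: power_one)
  then show ?thesis by (rule power2_le_imp_le) simp
qed

lemma nr2_bdd:
  assumes "bounded_op A" "bounded_op B"
  shows "bdd_above (insert 0 {cmod (cinner (0 + A y) x + cinner (B x + 0) y) | x y.
                     (norm x)\<^sup>2 + (norm y)\<^sup>2 = 1})"
proof -
  have "\<forall>v \<in> insert 0 {cmod (cinner (0 + A y) x + cinner (B x + 0) y) | x y.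
                     (norm x)\<^sup>2 + (norm y)\<^sup>2 = 1}. v \<le> onorm A + onorm B"
  proof
    fix v assume "v \<in> insert 0 {cmod (cinner (0 + A y) x + cinner (B x + 0) y) | x y.
                     (norm x)\<^sup>2 + (norm y)\<^sup>2 = 1}"
    then consider "v = 0" | x y where "(norm x)\<^sup>2 + (norm y)\<^sup>2 = 1"
        "v = cmod (cinner (A y) x + cinner (B x) y)" by auto
    then show "v \<le> onorm A + onorm B"
    proof cases
      case 1 then show ?thesis using bop_onorm_nonneg[OF assms(1)] bop_onorm_nonneg[OF assms(2)] by simp
    next
      case 2
      have nx: "norm x \<le> 1" using 2(1) by (rule norm_le_one_of_sq)
      have ny: "norm y \<le> 1" using 2(1) by (intro norm_le_one_of_sq[of y x]) simp
      have a: "onorm A * norm y * norm x \<le> onorm A"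
        using nx ny bop_onorm_nonneg[OF assms(1)]
        by (simp add: mult_le_one mult.assoc mult_left_le)
      have b: "onorm B * norm x * norm y \<le> onorm B"
        using nx ny bop_onorm_nonneg[OF assms(2)]
        by (simp add: mult_le_one mult.assoc mult_left_le)
      have "v \<le> cmod (cinner (A y) x) + cmod (cinner (B x) y)"
        using 2(2) norm_triangle_ineq by blast
      also have "\<dots> \<le> onorm A + onorm B"
        using cmod_cinner_op[OF assms(1), of y x] cmod_cinner_op[OF assms(2), of x y] a b
        by linarith
      finally show ?thesis .
    qed
  qed
  then show ?thesis unfolding bdd_above_def by blast
qed

lemma nr2_ge:
  assumes "bounded_op A" "bounded_op B" "(norm x)\<^sup>2 + (norm y)\<^sup>2 = 1"
  shows "cmod (cinner (A y) x + cinner (B x) y) \<le> numerical_radius2 (\<lambda>_. 0) A B (\<lambda>_. 0)"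
  unfolding numerical_radius2_def
  by (rule cSup_upper[OF _ nr2_bdd[OF assms(1,2)]]) (use assms(3) in force)

lemma nr2_nonneg:
  assumes "bounded_op A" "bounded_op B"
  shows "0 \<le> numerical_radius2 (\<lambda>_. 0) A B (\<lambda>_. 0)"
  unfolding numerical_radius2_def
  by (rule cSup_upper[OF _ nr2_bdd[OF assms(1,2)]]) blast


lemma nr2_hom:
  assumes "bounded_op A" "bounded_op B"
  shows "cmod (cinner (A y) x + cinner (B x) y)
         \<le> numerical_radius2 (\<lambda>_. 0) A B (\<lambda>_. 0) * ((norm x)\<^sup>2 + (norm y)\<^sup>2)"
proof (cases "(norm x)\<^sup>2 + (norm y)\<^sup>2 = 0")
  case True
  then have "x = 0" "y = 0" by (simp_all add: add_nonneg_eq_0_iff)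
  then show ?thesis using bop_zero[OF assms(1)] bop_zero[OF assms(2)] by simp
next
  case False
  define s where "s = (norm x)\<^sup>2 + (norm y)\<^sup>2"
  have s: "s > 0" using False by (simp add: s_def add_pos_nonneg order_le_neq_trans)
  define r where "r = sqrt s"
  have r: "r > 0" using s by (simp add: r_def)
  have rr: "r * r = s" using s by (simp add: r_def)
  define x' where "x' = scaleR (1/r) x"
  define y' where "y' = scaleR (1/r) y"
  have "(norm x')\<^sup>2 + (norm y')\<^sup>2 = s / (r * r)"
    using r by (simp add: x'_def y'_def s_def power2_eq_square field_simps)
  then have n1: "(norm x')\<^sup>2 + (norm y')\<^sup>2 = 1" using rr s by simp
  have eq: "cinner (A y') x' + cinner (B x') y'
      = of_real ((1/r) * (1/r)) * (cinner (A y) x + cinner (B x) y)"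
    by (simp add: x'_def y'_def bop_scaleR[OF assms(1)] bop_scaleR[OF assms(2)]
        cinner_scaleR_left cinner_scaleR_right algebra_simps)
  have "cmod (cinner (A y') x' + cinner (B x') y')
      = (1/r) * (1/r) * cmod (cinner (A y) x + cinner (B x) y)"
    unfolding eq norm_mult norm_of_real using r by simp
  moreover have "cmod (cinner (A y') x' + cinner (B x') y') \<le> numerical_radius2 (\<lambda>_. 0) A B (\<lambda>_. 0)"
    by (rule nr2_ge[OF assms n1])
  ultimately have "(1/r) * (1/r) * cmod (cinner (A y) x + cinner (B x) y)
      \<le> numerical_radius2 (\<lambda>_. 0) A B (\<lambda>_. 0)" by simp
  then have "cmod (cinner (A y) x + cinner (B x) y) / s \<le> numerical_radius2 (\<lambda>_. 0) A B (\<lambda>_. 0)"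
    using r rr by (simp add: field_simps)
  then have "cmod (cinner (A y) x + cinner (B x) y) \<le> numerical_radius2 (\<lambda>_. 0) A B (\<lambda>_. 0) * s"
    using s by (simp add: divide_le_eq)
  then show ?thesis by (simp add: s_def)
qed

lemma key1:
  assumes "bounded_op A" "bounded_op B"
  shows "cmod (cinner (A u) v + cinner (B v) u)
         \<le> 2 * norm u * norm v * numerical_radius2 (\<lambda>_. 0) A B (\<lambda>_. 0)"
proof (cases "u = 0 \<or> v = 0")
  case True
  then show ?thesis using bop_zero[OF assms(1)] bop_zero[OF assms(2)] nr2_nonneg[OF assms] by auto
next
  case False
  then have nu: "norm u > 0" and nv: "norm v > 0" by auto
  define s where "s = sqrt (norm v / norm u)"
  have s: "s > 0" using nu nv by (simp add: s_def)
  have ss: "s * s = norm v / norm u" using nu nv by (simp add: s_def)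
  define x where "x = scaleR (1/s) v"
  define y where "y = scaleR s u"
  have eq: "cinner (A y) x + cinner (B x) y
      = of_real (s * (1/s)) * (cinner (A u) v + cinner (B v) u)"
    by (simp add: x_def y_def bop_scaleR[OF assms(1)] bop_scaleR[OF assms(2)]
        cinner_scaleR_left cinner_scaleR_right algebra_simps)
  then have eq2: "cinner (A y) x + cinner (B x) y = cinner (A u) v + cinner (B v) u"
    using s by simp
  have "(norm x)\<^sup>2 = norm v * norm v / (s * s)"
    using s by (simp add: x_def power2_eq_square)
  also have "\<dots> = norm v * norm v / (norm v / norm u)" by (simp only: ss)
  also have "\<dots> = norm u * norm v" using nu nv by (simp add: field_simps)
  finally have nx: "(norm x)\<^sup>2 = norm u * norm v" .
  have "(norm y)\<^sup>2 = (s * s) * (norm u * norm u)"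
    using s by (simp add: y_def power2_eq_square)
  also have "\<dots> = norm u * norm v" using ss nu nv by (simp add: field_simps)
  finally have ny: "(norm y)\<^sup>2 = norm u * norm v" .
  show ?thesis
    using nr2_hom[OF assms, of y x] unfolding eq2 nx ny by (simp add: algebra_simps)
qed

lemma w2_le_w:
  assumes "bounded_op A"
  shows "numerical_radius2 (\<lambda>_. 0) A A (\<lambda>_. 0) \<le> numerical_radius A"
  unfolding numerical_radius2_def
proof (rule cSup_least)
  show "insert 0 {cmod (cinner (0 + A y) x + cinner (A x + 0) y) |x y.
          (norm x)\<^sup>2 + (norm y)\<^sup>2 = 1} \<noteq> {}" by blast
next
  fix v assume "v \<in> insert 0 {cmod (cinner (0 + A y) x + cinner (A x + 0) y) |x y.
          (norm x)\<^sup>2 + (norm y)\<^sup>2 = 1}"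
  then consider "v = 0" | x y where "(norm x)\<^sup>2 + (norm y)\<^sup>2 = 1"
      "v = cmod (cinner (A y) x + cinner (A x) y)" by auto
  then show "v \<le> numerical_radius A"
  proof cases
    case 1 then show ?thesis using nr_nonneg[OF assms] by simp
  next
    case 2
    have lin: "linear A" using bop_linear[OF assms] bounded_linear.linear by blast
    have Aadd: "A (x + y) = A x + A y" by (rule linear_add[OF lin])
    have Adiff: "A (x - y) = A x - A y" by (rule linear_diff[OF lin])
    have id: "cinner (A (x + y)) (x + y) - cinner (A (x - y)) (x - y)
        = 2 * (cinner (A y) x + cinner (A x) y)"
      unfolding Aadd Adiff
      by (simp add: cinner_add_left cinner_add_right cinner_diff_left cinner_diff_right
          algebra_simps)
    have "complex_of_real ((norm (x + y))\<^sup>2 + (norm (x - y))\<^sup>2)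
        = cinner (x + y) (x + y) + cinner (x - y) (x - y)"
      by (simp add: cinner_self)
    also have "\<dots> = 2 * cinner x x + 2 * cinner y y"
      by (simp add: cinner_add_left cinner_add_right cinner_diff_left cinner_diff_right
          algebra_simps)
    also have "\<dots> = complex_of_real (2 * ((norm x)\<^sup>2 + (norm y)\<^sup>2))"
      by (simp add: cinner_self)
    finally have par: "(norm (x + y))\<^sup>2 + (norm (x - y))\<^sup>2 = 2"
      using 2(1) by (simp only: of_real_eq_iff)
    have "2 * v = cmod (cinner (A (x + y)) (x + y) - cinner (A (x - y)) (x - y))"
      unfolding id 2(2) norm_mult by simp
    also have "\<dots> \<le> cmod (cinner (A (x + y)) (x + y)) + cmod (cinner (A (x - y)) (x - y))"
      by (rule norm_triangle_ineq4)
    also have "\<dots> \<le> numerical_radius A * (norm (x + y))\<^sup>2 + numerical_radius A * (norm (x - y))\<^sup>2"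
      by (intro add_mono nr_hom[OF assms])
    also have "\<dots> = numerical_radius A * ((norm (x + y))\<^sup>2 + (norm (x - y))\<^sup>2)"
      by (simp only: distrib_left)
    also have "\<dots> = 2 * numerical_radius A" unfolding par by simp
    finally show ?thesis by simp
  qed
qed

lemma adj_cinner:
  assumes "is_adjoint X Xs" shows "cinner (Xs z) x = cinner z (X x)"
proof -
  have "cinner (Xs z) x = cnj (cinner x (Xs z))" by (rule cinner_commute)
  also have "\<dots> = cnj (cinner (X x) z)" using assms unfolding is_adjoint_def by simp
  also have "\<dots> = cinner z (X x)" by (metis cinner_commute)
  finally show ?thesis .
qed

lemma part1:
  fixes A B X Y Xs Ys :: "'a::chilbert_space \<Rightarrow> 'a"
  assumes "bounded_op A" and "bounded_op B" and "bounded_op X" and "bounded_op Y"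
    and "is_adjoint X Xs" and "is_adjoint Y Ys"
  shows "numerical_radius (\<lambda>x. Xs (A (Y x)) + Ys (B (X x)))
           \<le> 2 * onorm X * onorm Y * numerical_radius2 (\<lambda>_. 0) A B (\<lambda>_. 0)"
  unfolding numerical_radius_def
proof (rule cSup_least)
  show "insert 0 {cmod (cinner (Xs (A (Y x)) + Ys (B (X x))) x) |x. norm x = 1} \<noteq> {}" by blast
next
  have oX: "0 \<le> onorm X" by (rule bop_onorm_nonneg[OF assms(3)])
  have oY: "0 \<le> onorm Y" by (rule bop_onorm_nonneg[OF assms(4)])
  have W: "0 \<le> numerical_radius2 (\<lambda>_. 0) A B (\<lambda>_. 0)" by (rule nr2_nonneg[OF assms(1,2)])
  fix v assume "v \<in> insert 0 {cmod (cinner (Xs (A (Y x)) + Ys (B (X x))) x) |x. norm x = 1}"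
  then consider "v = 0" | x where "norm x = 1"
      "v = cmod (cinner (Xs (A (Y x)) + Ys (B (X x))) x)" by auto
  then show "v \<le> 2 * onorm X * onorm Y * numerical_radius2 (\<lambda>_. 0) A B (\<lambda>_. 0)"
  proof cases
    case 1 then show ?thesis using oX oY W by simp
  next
    case 2
    have "v = cmod (cinner (A (Y x)) (X x) + cinner (B (X x)) (Y x))"
      unfolding 2(2) cinner_add_left adj_cinner[OF assms(5)] adj_cinner[OF assms(6)] ..
    also have "\<dots> \<le> 2 * norm (Y x) * norm (X x) * numerical_radius2 (\<lambda>_. 0) A B (\<lambda>_. 0)"
      by (rule key1[OF assms(1,2)])
    also have "\<dots> \<le> 2 * onorm Y * onorm X * numerical_radius2 (\<lambda>_. 0) A B (\<lambda>_. 0)"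
    proof -
      have a: "norm (Y x) \<le> onorm Y" using bop_bound[OF assms(4), of x] 2(1) by simp
      have b: "norm (X x) \<le> onorm X" using bop_bound[OF assms(3), of x] 2(1) by simp
      have "norm (Y x) * norm (X x) \<le> onorm Y * onorm X"
        by (rule mult_mono[OF a b oY norm_ge_zero])
      then have "(norm (Y x) * norm (X x)) * numerical_radius2 (\<lambda>_. 0) A B (\<lambda>_. 0)
          \<le> (onorm Y * onorm X) * numerical_radius2 (\<lambda>_. 0) A B (\<lambda>_. 0)"
        by (rule mult_right_mono[OF _ W])
      then show ?thesis by (simp add: mult.assoc)
    qed
    finally show ?thesis by (simp add: algebra_simps)
  qed
qed

theorem theorem4p15:
  fixes A B X Y Xs Ys :: "'a::chilbert_space \<Rightarrow> 'a"
  assumes "bounded_op A" and "bounded_op B" and "bounded_op X" and "bounded_op Y"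
    and "is_adjoint X Xs" and "is_adjoint Y Ys"
  shows "numerical_radius (\<lambda>x. Xs (A (Y x)) + Ys (B (X x)))
           \<le> 2 * onorm X * onorm Y * numerical_radius2 (\<lambda>_. 0) A B (\<lambda>_. 0)
         \<and> numerical_radius (\<lambda>x. Xs (A (Y x)) + Ys (A (X x)))
           \<le> 2 * onorm X * onorm Y * numerical_radius A"
proof
  show "numerical_radius (\<lambda>x. Xs (A (Y x)) + Ys (B (X x)))
           \<le> 2 * onorm X * onorm Y * numerical_radius2 (\<lambda>_. 0) A B (\<lambda>_. 0)"
    by (rule part1[OF assms])
  have oX: "0 \<le> onorm X" by (rule bop_onorm_nonneg[OF assms(3)])
  have oY: "0 \<le> onorm Y" by (rule bop_onorm_nonneg[OF assms(4)])
  have "numerical_radius (\<lambda>x. Xs (A (Y x)) + Ys (A (X x)))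
           \<le> 2 * onorm X * onorm Y * numerical_radius2 (\<lambda>_. 0) A A (\<lambda>_. 0)"
    by (rule part1[OF assms(1,1,3-6)])
  also have "\<dots> \<le> 2 * onorm X * onorm Y * numerical_radius A"
    by (rule mult_left_mono[OF w2_le_w[OF assms(1)]]) (use oX oY in simp)
  finally show "numerical_radius (\<lambda>x. Xs (A (Y x)) + Ys (A (X x)))
           \<le> 2 * onorm X * onorm Y * numerical_radius A" .
qed

end
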